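(* Let $X$ be a Dedekind complete Riesz space with weak order unit $e$ and conditional expectation operator $T$ with $Te=e$, and assume $X$ is $T$-universally complete. Let $(x_{n})$ be an order bounded sequence in $X_{+}$. If $\sum_{n=1}^{\infty}Tx_{n}\in X^{u}$, then $\limsup_{n\to\infty}x_{n}=0$.
   Context: A conditional expectation operator on $X$ is a strictly positive, order continuous linear projection $T$ with $Te=e$ whose range is a Dedekind complete Riesz subspace. $X$ is $T$-universally complete if every increasing net $(x_\alpha)$ in $X$ with $(Tx_\alpha)$ order bounded in $X^u$ is order convergent in $X$; $X^u$ is the universal completion of $X$. The sum $\sum_n Tx_n$ is the supremum of its partial sums taken in the sup-completion $X^{s}$ of $X$ (the Dedekind complete lattice cone of classes of nonempty upward directed subsets of $X$, which contains $X^u_+$). $\limsup_n x_n=\inf_n\sup_{k\ge n}x_k$. *)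

theory Defs
  imports Complex_Main "HOL-Library.Lattice_Algebras"
begin

text \<open>Riesz spaces: real vector spaces with a compatible lattice order.
  Dedekind completeness is the class conditionally_complete_lattice.\<close>

definition directed_on :: "'i set \<Rightarrow> ('i \<Rightarrow> 'i \<Rightarrow> bool) \<Rightarrow> bool" where
  "directed_on I le \<longleftrightarrow> I \<noteq> {} \<and> (\<forall>i\<in>I. le i i)
     \<and> (\<forall>i\<in>I. \<forall>j\<in>I. \<forall>k\<in>I. le i j \<and> le j k \<longrightarrow> le i k)
     \<and> (\<forall>i\<in>I. \<forall>j\<in>I. \<exists>k\<in>I. le i k \<and> le j k)"

definition rabs :: "'a::lattice_ab_group_add \<Rightarrow> 'a" where
  "rabs x = sup x (- x)"

definition order_conv ::
  "'i set \<Rightarrow> ('i \<Rightarrow> 'i \<Rightarrow> bool) \<Rightarrow> ('i \<Rightarrow> 'a::lattice_ab_group_add) \<Rightarrow> 'a \<Rightarrow> bool" where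
  "order_conv I le x l \<longleftrightarrow> (\<exists>D. D \<noteq> {}
      \<and> (\<forall>a\<in>D. \<forall>b\<in>D. \<exists>c\<in>D. c \<le> a \<and> c \<le> b)
      \<and> (\<forall>d\<in>D. 0 \<le> d) \<and> (\<forall>z. (\<forall>d\<in>D. z \<le> d) \<longrightarrow> z \<le> 0)
      \<and> (\<forall>d\<in>D. \<exists>i0\<in>I. \<forall>i\<in>I. le i0 i \<longrightarrow> rabs (x i - l) \<le> d))"

definition weak_order_unit :: "'a::lattice_ab_group_add \<Rightarrow> bool" where
  "weak_order_unit e \<longleftrightarrow> 0 < e \<and> (\<forall>x. inf (rabs x) e = 0 \<longrightarrow> x = 0)"

definition linear_op :: "('a::real_vector \<Rightarrow> 'b::real_vector) \<Rightarrow> bool" where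
  "linear_op T \<longleftrightarrow> (\<forall>x y. T (x + y) = T x + T y) \<and> (\<forall>c x. T (c *\<^sub>R x) = c *\<^sub>R T x)"

text \<open>Order continuity (nets indexed by subsets of the space itself).\<close>
definition order_continuous ::
  "('a::{ordered_real_vector,lattice_ab_group_add} \<Rightarrow> 'a) \<Rightarrow> bool" where
  "order_continuous T \<longleftrightarrow> (\<forall>(I::'a set) le (x::'a \<Rightarrow> 'a).
      directed_on I le \<and> order_conv I le x 0 \<longrightarrow> order_conv I le (\<lambda>i. T (x i)) 0)"

definition cond_exp_op ::
  "('a::{ordered_real_vector,lattice_ab_group_add} \<Rightarrow> 'a) \<Rightarrow> 'a \<Rightarrow> bool" where
  "cond_exp_op T e \<longleftrightarrow> linear_op T
     \<and> (\<forall>x. 0 < x \<longrightarrow> 0 < T x)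
     \<and> order_continuous T
     \<and> (\<forall>x. T (T x) = T x)
     \<and> T e = e
     \<and> (\<forall>a\<in>range T. \<forall>b\<in>range T. sup a b \<in> range T)
     \<and> (\<forall>S. S \<subseteq> range T \<and> S \<noteq> {} \<and> (\<exists>u\<in>range T. \<forall>s\<in>S. s \<le> u) \<longrightarrow>
          (\<exists>m\<in>range T. (\<forall>s\<in>S. s \<le> m) \<and> (\<forall>u\<in>range T. (\<forall>s\<in>S. s \<le> u) \<longrightarrow> m \<le> u)))"

text \<open>J embeds X into a universal completion Y of X: Y is Dedekind complete (class)
  and laterally complete, J is an injective Riesz homomorphism and J(X) is order dense in Y.\<close>
definition universal_completion ::
  "('a::{ordered_real_vector,lattice_ab_group_add} \<Rightarrow>
    'b::{ordered_real_vector,lattice_ab_group_add,conditionally_complete_lattice}) \<Rightarrow> bool" where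
  "universal_completion J \<longleftrightarrow> linear_op J \<and> inj J
     \<and> (\<forall>a b. J (sup a b) = sup (J a) (J b))
     \<and> (\<forall>S::'b set. (\<forall>s\<in>S. 0 \<le> s) \<and> (\<forall>s\<in>S. \<forall>t\<in>S. s \<noteq> t \<longrightarrow> inf s t = 0) \<longrightarrow> bdd_above S)
     \<and> (\<forall>y::'b. 0 < y \<longrightarrow> (\<exists>x::'a. 0 < J x \<and> J x \<le> y))"

definition T_universally_complete ::
  "('a::{ordered_real_vector,lattice_ab_group_add} \<Rightarrow> 'a) \<Rightarrow>
   ('a \<Rightarrow> 'b::{ordered_real_vector,lattice_ab_group_add,conditionally_complete_lattice}) \<Rightarrow> bool" where
  "T_universally_complete T J \<longleftrightarrow> (\<forall>(I::'a set) le (x::'a \<Rightarrow> 'a).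
      directed_on I le \<and> (\<forall>i\<in>I. \<forall>j\<in>I. le i j \<longrightarrow> x i \<le> x j)
      \<and> (\<exists>a b. \<forall>i\<in>I. a \<le> J (T (x i)) \<and> J (T (x i)) \<le> b)
      \<longrightarrow> (\<exists>l. order_conv I le x l))"

end

theory Submission
  imports Defs
begin

lemma lin_diff:
  assumes "linear_op T" shows "T (a - b) = T a - T b"
proof -
  have "T ((a - b) + b) = T (a - b) + T b" using assms unfolding linear_op_def by blast
  then have "T a = T (a - b) + T b" by simp
  then show ?thesis by (simp add: eq_diff_eq)
qed

lemma lin_add: "linear_op T \<Longrightarrow> T (a + b) = T a + T b"
  by (simp add: linear_op_def)

lemma lin_zero: "linear_op T \<Longrightarrow> T 0 = 0"
  using lin_diff[of T 0 0] by simp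

lemma lin_sum:
  assumes "linear_op T" shows "T (\<Sum>k\<in>A. f k) = (\<Sum>k\<in>A. T (f k))"
proof (cases "finite A")
  case True
  then show ?thesis by (induction A rule: finite_induct) (auto simp: lin_zero[OF assms] lin_add[OF assms])
next
  case False
  then show ?thesis by (simp add: lin_zero[OF assms])
qed

lemma T_mono:
  assumes "cond_exp_op T e" "a \<le> b" shows "T a \<le> T b"
proof -
  have lin: "linear_op T" using assms by (simp add: cond_exp_op_def)
  show ?thesis
  proof (cases "a = b")
    case True then show ?thesis by simp
  next
    case False
    then have "0 < b - a" using assms(2) by (simp add: less_le)
    then have "0 < T (b - a)" using assms(1) by (simp add: cond_exp_op_def)
    then show ?thesis by (simp add: lin_diff[OF lin])
  qed
qed

lemma J_mono:
  assumes "universal_completion J" "a \<le> b" shows "J a \<le> J b"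
proof -
  have "sup a b = b" using assms(2) by (simp add: sup_absorb2)
  then have "sup (J a) (J b) = J b" using assms(1) by (metis universal_completion_def)
  then show ?thesis by (metis sup.orderI sup_commute)
qed

lemma J_refl:
  assumes "universal_completion J" "J a \<le> J b" shows "a \<le> b"
proof -
  have "sup (J a) (J b) = J b" using assms(2) by (simp add: sup_absorb2)
  then have "J (sup a b) = J b" using assms(1) by (metis universal_completion_def)
  then have "sup a b = b" using assms(1) unfolding universal_completion_def by (meson injD)
  then show ?thesis by (metis sup.orderI sup_commute)
qed

lemma J_inf:
  assumes U: "universal_completion J"
    and D0: "\<forall>d\<in>D. 0 \<le> d" and Dinf: "\<forall>q. (\<forall>d\<in>D. q \<le> d) \<longrightarrow> q \<le> 0"
    and c: "\<forall>d\<in>D. c \<le> J d"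
  shows "c \<le> 0"
proof (rule ccontr)
  assume nc: "\<not> c \<le> 0"
  define p where "p = sup c 0"
  have "p \<noteq> 0" using nc unfolding p_def by (metis sup.cobounded1)
  then have "0 < p" unfolding p_def by (simp add: less_le)
  then obtain x0 where x0: "0 < J x0" "J x0 \<le> p" using U unfolding universal_completion_def by blast
  have J0: "J 0 = 0" using U lin_zero by (auto simp: universal_completion_def)
  have "x0 \<le> d" if "d \<in> D" for d
  proof -
    have "0 \<le> J d" using J_mono[OF U, of 0 d] D0 that J0 by simp
    then have "p \<le> J d" using c that unfolding p_def by simp
    then show ?thesis using x0 J_refl[OF U] by (meson order_trans)
  qed
  then have "x0 \<le> 0" using Dinf by blast
  then have "J x0 \<le> 0" using J_mono[OF U, of x0 0] J0 by simp
  then show False using x0 by simp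
qed

fun zz :: "(nat \<Rightarrow> 'a::lattice) \<Rightarrow> nat \<Rightarrow> nat \<Rightarrow> 'a" where
  "zz x n 0 = x n"
| "zz x n (Suc m) = sup (zz x n m) (x (n + Suc m))"

lemma zz_mono: "m \<le> m' \<Longrightarrow> zz x n m \<le> zz x n m'"
  by (rule lift_Suc_mono_le[of "zz x n"]) auto

lemma zz_ge: "j \<le> m \<Longrightarrow> x (n + j) \<le> zz x n m"
proof (induction m)
  case 0 then show ?case by simp
next
  case (Suc m)
  then show ?case by (cases "j = Suc m") (auto intro: le_supI1)
qed

lemma zz_le: "(\<And>k. k \<ge> n \<Longrightarrow> x k \<le> Z) \<Longrightarrow> zz x n m \<le> Z"
  by (induction m) auto

lemma zz_sum:
  fixes x :: "nat \<Rightarrow> 'a::lattice_ab_group_add"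
  assumes "\<forall>k. 0 \<le> x k"
  shows "zz x n m \<le> (\<Sum>k\<in>{n..<n + Suc m}. x k)"
proof (induction m)
  case 0 then show ?case by simp
next
  case (Suc m)
  have A: "0 \<le> (\<Sum>k\<in>{n..<n + Suc m}. x k)" using assms by (simp add: sum_nonneg)
  have "(\<Sum>k\<in>{n..<n + Suc (Suc m)}. x k) = (\<Sum>k\<in>{n..<n + Suc m}. x k) + x (n + Suc m)"
    by simp
  moreover have "zz x n m \<le> (\<Sum>k\<in>{n..<n + Suc m}. x k) + x (n + Suc m)"
    using Suc assms by (metis add_increasing2)
  moreover have "x (n + Suc m) \<le> (\<Sum>k\<in>{n..<n + Suc m}. x k) + x (n + Suc m)"
    using A by (simp add: add_increasing)
  ultimately show ?case by simp
qed

lemma sum_split_aux: "(n::nat) \<le> m \<Longrightarrow> (\<Sum>k<m. f k) = (\<Sum>k<n. f k) + (\<Sum>k\<in>{n..<m}. (f k :: 'a::comm_monoid_add))"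
proof -
  assume "n \<le> m"
  then have "{..<n} \<union> {n..<m} = {..<m}" by auto
  moreover have "{..<n} \<inter> {n..<m} = {}" by auto
  ultimately show ?thesis
    using sum.union_disjoint[of "{..<n}" "{n..<m}" f] by simp
qed

theorem mainTheorem7:
  fixes T :: "'a::{ordered_real_vector,lattice_ab_group_add,conditionally_complete_lattice} \<Rightarrow> 'a"
    and e :: 'a
    and J :: "'a \<Rightarrow> 'b::{ordered_real_vector,lattice_ab_group_add,conditionally_complete_lattice}"
    and x :: "nat \<Rightarrow> 'a"
  assumes "weak_order_unit e"
    and "cond_exp_op T e"
    and "universal_completion J"
    and "T_universally_complete T J"
    and "\<forall>n. 0 \<le> x n"
    and "\<exists>u. \<forall>n. x n \<le> u"
    and "\<exists>s. \<forall>n. J (\<Sum>k<n. T (x k)) \<le> s"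
  shows "(INF n. SUP k\<in>{n..}. x k) = 0"
proof -
  note C = assms(2) and U = assms(3) and xpos = assms(5)
  have linT: "linear_op T" using C by (simp add: cond_exp_op_def)
  have linJ: "linear_op J" using U by (simp add: universal_completion_def)
  have J0: "J 0 = 0" using lin_zero[OF linJ] .
  have T0: "T 0 = 0" using lin_zero[OF linT] .
  obtain u where u: "\<forall>n. x n \<le> u" using assms(6) by blast
  obtain s where s: "\<forall>n. J (\<Sum>k<n. T (x k)) \<le> s" using assms(7) by blast
  define P where "P n = (\<Sum>k<n. T (x k))" for n
  define S where "S = Sup (range (\<lambda>n. J (P n)))"
  have bddS: "bdd_above (range (\<lambda>n. J (P n)))" using s unfolding P_def by (auto intro: bdd_aboveI)
  have PS: "J (P n) \<le> S" for n unfolding S_def using bddS by (intro cSup_upper) auto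
  define Y where "Y n = (SUP k\<in>{n..}. x k)" for n
  have bddx: "bdd_above (x ` A)" for A using u by (auto intro: bdd_aboveI)
  have xY: "k \<ge> n \<Longrightarrow> x k \<le> Y n" for k n unfolding Y_def using bddx by (intro cSUP_upper) auto
  have Y0: "0 \<le> Y n" for n using xY[of n n] xpos by (meson order_trans order_refl)
  define y where "y = (INF n. Y n)"
  have bddY: "bdd_below (range Y)" using Y0 by (intro bdd_belowI[of _ 0]) auto
  have yY: "y \<le> Y n" for n unfolding y_def using bddY by (rule cINF_lower) auto
  have y0: "0 \<le> y" unfolding y_def using Y0 by (intro cINF_greatest) auto
  have key: "J (T y) \<le> S - J (P n)" for n
  proof -
    define I where "I = range (zz x n)"
    have zY: "zz x n m \<le> Y n" for m by (rule zz_le) (rule xY)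
    have dir: "directed_on I (\<le>)"
      unfolding directed_on_def I_def
    proof (intro conjI ballI)
      fix i j assume "i \<in> range (zz x n)" "j \<in> range (zz x n)"
      then obtain a b where ab: "i = zz x n a" "j = zz x n b" by auto
      show "\<exists>k\<in>range (zz x n). i \<le> k \<and> j \<le> k"
        using ab by (intro bexI[of _ "zz x n (max a b)"]) (auto intro: zz_mono)
    qed auto
    have oc: "order_conv I (\<le>) (\<lambda>i. Y n - i) 0"
      unfolding order_conv_def
    proof (intro exI[of _ "range (\<lambda>m. Y n - zz x n m)"] conjI)
      show "range (\<lambda>m. Y n - zz x n m) \<noteq> {}" by simp
      show "\<forall>a\<in>range (\<lambda>m. Y n - zz x n m). \<forall>b\<in>range (\<lambda>m. Y n - zz x n m).
              \<exists>c\<in>range (\<lambda>m. Y n - zz x n m). c \<le> a \<and> c \<le> b"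
      proof (intro ballI)
        fix a b assume "a \<in> range (\<lambda>m. Y n - zz x n m)" "b \<in> range (\<lambda>m. Y n - zz x n m)"
        then obtain ma mb where "a = Y n - zz x n ma" "b = Y n - zz x n mb" by auto
        then show "\<exists>c\<in>range (\<lambda>m. Y n - zz x n m). c \<le> a \<and> c \<le> b"
          by (intro bexI[of _ "Y n - zz x n (max ma mb)"]) (auto intro!: diff_left_mono zz_mono)
      qed
      show "\<forall>d\<in>range (\<lambda>m. Y n - zz x n m). 0 \<le> d" using zY by auto
      show "\<forall>q. (\<forall>d\<in>range (\<lambda>m. Y n - zz x n m). q \<le> d) \<longrightarrow> q \<le> 0"
      proof (intro allI impI)
        fix q assume q: "\<forall>d\<in>range (\<lambda>m. Y n - zz x n m). q \<le> d"
        have "x k \<le> Y n - q" if "k \<in> {n..}" for k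
        proof -
          have "x (n + (k - n)) \<le> zz x n (k - n)" by (rule zz_ge) simp
          moreover have "q \<le> Y n - zz x n (k - n)" using q by auto
          ultimately have "q + x k \<le> Y n" using that
            by (simp add: le_diff_eq) (meson add_left_mono order_trans)
          then show ?thesis by (simp add: le_diff_eq add.commute)
        qed
        then have "Y n \<le> Y n - q" unfolding Y_def by (intro cSUP_least) auto
        then show "q \<le> 0" by (simp add: le_diff_eq)
      qed
      show "\<forall>d\<in>range (\<lambda>m. Y n - zz x n m). \<exists>i0\<in>I. \<forall>i\<in>I. i0 \<le> i \<longrightarrow> rabs (Y n - i - 0) \<le> d"
      proof
        fix d assume "d \<in> range (\<lambda>m. Y n - zz x n m)"
        then obtain m where dm: "d = Y n - zz x n m" by auto
        show "\<exists>i0\<in>I. \<forall>i\<in>I. i0 \<le> i \<longrightarrow> rabs (Y n - i - 0) \<le> d"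
        proof (intro bexI[of _ "zz x n m"] ballI impI)
          fix i assume "i \<in> I" "zz x n m \<le> i"
          then have "i \<le> Y n" using zY unfolding I_def by auto
          then have "rabs (Y n - i - 0) = Y n - i"
          proof -
            have "i - Y n \<le> Y n - i" using \<open>i \<le> Y n\<close>
              by (meson diff_ge_0_iff_ge diff_le_0_iff_le order_trans)
            then show ?thesis unfolding rabs_def by (simp add: sup_absorb1)
          qed
          then show "rabs (Y n - i - 0) \<le> d" using \<open>zz x n m \<le> i\<close> dm by (simp add: diff_left_mono)
        qed (simp add: I_def)
      qed
    qed
    have "order_continuous T" using C by (simp add: cond_exp_op_def)
    then have "order_conv I (\<le>) (\<lambda>i. T (Y n - i)) 0"
      using dir oc unfolding order_continuous_def by blast
    then obtain D where D0: "\<forall>d\<in>D. 0 \<le> d" and Dinf: "\<forall>q. (\<forall>d\<in>D. q \<le> d) \<longrightarrow> q \<le> 0"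
      and Dev: "\<forall>d\<in>D. \<exists>i0\<in>I. \<forall>i\<in>I. i0 \<le> i \<longrightarrow> rabs (T (Y n - i) - 0) \<le> d"
      unfolding order_conv_def by blast
    have "J (T y) - (S - J (P n)) \<le> J d" if dD: "d \<in> D" for d
    proof -
      obtain m where hm: "\<forall>i\<in>I. zz x n m \<le> i \<longrightarrow> rabs (T (Y n - i) - 0) \<le> d"
        using Dev dD unfolding I_def by auto
      have "rabs (T (Y n - zz x n m)) \<le> d" using hm unfolding I_def by auto
      then have "T (Y n - zz x n m) \<le> d" unfolding rabs_def by (meson order_trans sup_ge1)
      then have a1: "T (Y n) \<le> d + T (zz x n m)" by (simp add: lin_diff[OF linT] diff_le_eq add.commute)
      have "T (zz x n m) \<le> T (\<Sum>k\<in>{n..<n + Suc m}. x k)" by (rule T_mono[OF C zz_sum[OF xpos]])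
      also have "\<dots> = P (n + Suc m) - P n"
        unfolding P_def lin_sum[OF linT] using sum_split_aux[of n "n + Suc m" "\<lambda>k. T (x k)"] by simp
      finally have a2: "T (zz x n m) \<le> P (n + Suc m) - P n" .
      have "T y \<le> T (Y n)" by (rule T_mono[OF C yY])
      also have "\<dots> \<le> d + (P (n + Suc m) - P n)" using a1 a2 by (meson add_left_mono order_trans)
      finally have "J (T y) \<le> J (d + (P (n + Suc m) - P n))" by (rule J_mono[OF U])
      also have "\<dots> = J d + J (P (n + Suc m)) - J (P n)"
        by (simp add: lin_add[OF linJ] lin_diff[OF linJ])
      also have "\<dots> \<le> J d + S - J (P n)" using PS[of "n + Suc m"] by (simp add: diff_right_mono)
      finally show ?thesis by (simp add: algebra_simps)
    qed
    then have "J (T y) - (S - J (P n)) \<le> 0" using J_inf[OF U D0 Dinf] by blast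
    then show ?thesis by simp
  qed
  have "J (P n) \<le> S - J (T y)" for n using key[of n] by (simp add: le_diff_eq algebra_simps)
  then have "S \<le> S - J (T y)" unfolding S_def by (intro cSUP_least) auto
  then have "J (T y) \<le> J 0" using J0 by (simp add: le_diff_eq)
  then have "T y \<le> 0" by (rule J_refl[OF U])
  moreover have "0 \<le> T y" using T_mono[OF C y0] T0 by simp
  ultimately have Ty: "T y = 0" by simp
  have "y = 0"
  proof (rule ccontr)
    assume "y \<noteq> 0"
    then have "0 < y" using y0 by (simp add: less_le)
    then have "0 < T y" using C by (simp add: cond_exp_op_def)
    then show False using Ty by simp
  qed
  then show ?thesis unfolding y_def Y_def .
qed

end
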